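(* Let $a\le b\le c$ be positive integers, let $\epsilon,d$ satisfy $0<2\epsilon\le d$, and let $m$ be sufficiently large (in terms of $a,b,c,\epsilon,d$). Let $H$ be a $3$-graph and let $V_1,V_2,V_3\subseteq V(H)$ be mutually disjoint with $(V_1,V_2,V_3)$ being $(\epsilon,d)$-regular, such that $|V_1|\le|V_2|\le|V_3|=m$ and \[ \frac{|V_1|}a\ge\frac{|V_2|}b\ge\frac{|V_3|}c . \] Then there is a $K_{a,b,c}$-tiling in $H[V_1\cup V_2\cup V_3]$ covering all but at most $\frac ca\epsilon(|V_1|+|V_2|+|V_3|)$ vertices of $V_1\cup V_2\cup V_3$.
   Context: For mutually disjoint nonempty vertex sets $V_1,V_2,V_3$ of a $3$-graph $H$, $e(V_1,V_2,V_3)$ is the number of edges with one vertex in each $V_i$ and $d(V_1,V_2,V_3)=e(V_1,V_2,V_3)/(|V_1||V_2||V_3|)$. The triple $(V_1,V_2,V_3)$ is $(\epsilon,d)$-regular if $|d(A_1,A_2,A_3)-d|\le\epsilon$ for all $A_i\subseteq V_i$ with $|A_i|\ge\epsilon|V_i|$, $i\in[3]$. $K_{a,b,c}$ is the complete $3$-partite $3$-graph with parts of sizes $a,b,c$; a $K_{a,b,c}$-tiling is a collection of vertex-disjoint copies of $K_{a,b,c}$. *)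

theory Defs
  imports Complex_Main
begin

definition three_graph :: "'a set \<Rightarrow> 'a set set \<Rightarrow> bool" where
  "three_graph VH H \<longleftrightarrow> (\<forall>e\<in>H. e \<subseteq> VH \<and> card e = 3)"

definition cross_edges :: "'a set set \<Rightarrow> 'a set \<Rightarrow> 'a set \<Rightarrow> 'a set \<Rightarrow> nat" where
  "cross_edges H V1 V2 V3 =
     card {e\<in>H. \<exists>x\<in>V1. \<exists>y\<in>V2. \<exists>z\<in>V3. e = {x, y, z}}"

definition density :: "'a set set \<Rightarrow> 'a set \<Rightarrow> 'a set \<Rightarrow> 'a set \<Rightarrow> real" where
  "density H V1 V2 V3 =
     real (cross_edges H V1 V2 V3) / (real (card V1) * real (card V2) * real (card V3))"

definition eps_d_regular :: "'a set set \<Rightarrow> real \<Rightarrow> real \<Rightarrow> 'a set \<Rightarrow> 'a set \<Rightarrow> 'a set \<Rightarrow> bool" where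
  "eps_d_regular H \<epsilon> d V1 V2 V3 \<longleftrightarrow>
     (\<forall>A1 A2 A3. A1 \<subseteq> V1 \<and> A2 \<subseteq> V2 \<and> A3 \<subseteq> V3 \<and>
        real (card A1) \<ge> \<epsilon> * real (card V1) \<and>
        real (card A2) \<ge> \<epsilon> * real (card V2) \<and>
        real (card A3) \<ge> \<epsilon> * real (card V3) \<longrightarrow>
        \<bar>density H A1 A2 A3 - d\<bar> \<le> \<epsilon>)"

definition is_Kabc_copy :: "'a set set \<Rightarrow> 'a set \<Rightarrow> nat \<Rightarrow> nat \<Rightarrow> nat \<Rightarrow> 'a set \<times> 'a set \<times> 'a set \<Rightarrow> bool" where
  "is_Kabc_copy H U a b c T \<longleftrightarrow> (case T of (A, B, C) \<Rightarrow>
     A \<union> B \<union> C \<subseteq> U \<and> finite A \<and> finite B \<and> finite C \<and>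
     card A = a \<and> card B = b \<and> card C = c \<and>
     A \<inter> B = {} \<and> A \<inter> C = {} \<and> B \<inter> C = {} \<and>
     (\<forall>x\<in>A. \<forall>y\<in>B. \<forall>z\<in>C. {x, y, z} \<in> H))"

definition copy_verts :: "'a set \<times> 'a set \<times> 'a set \<Rightarrow> 'a set" where
  "copy_verts T = (case T of (A, B, C) \<Rightarrow> A \<union> B \<union> C)"

definition is_Kabc_tiling :: "'a set set \<Rightarrow> 'a set \<Rightarrow> nat \<Rightarrow> nat \<Rightarrow> nat \<Rightarrow> ('a set \<times> 'a set \<times> 'a set) set \<Rightarrow> bool" where
  "is_Kabc_tiling H U a b c \<T> \<longleftrightarrow>
     (\<forall>T\<in>\<T>. is_Kabc_copy H U a b c T) \<and>
     (\<forall>T\<in>\<T>. \<forall>T'\<in>\<T>. T \<noteq> T' \<longrightarrow> copy_verts T \<inter> copy_verts T' = {})"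

end

theory Submission imports Defs "HOL-Analysis.Convex" begin


lemma card_rel_sum:
  assumes "finite X" "finite P" "R \<subseteq> X \<times> P"
  shows "card R = (\<Sum>p\<in>P. card {x\<in>X. (x,p)\<in>R})"
proof -
  have "R = (\<Union>p\<in>P. {x\<in>X. (x,p)\<in>R} \<times> {p})" using assms(3) by auto
  hence "card R = card (\<Union>p\<in>P. {x\<in>X. (x,p)\<in>R} \<times> {p})" by simp
  also have "\<dots> = (\<Sum>p\<in>P. card ({x\<in>X. (x,p)\<in>R} \<times> {p}))"
    by (rule card_UN_disjoint) (use assms in auto)
  also have "\<dots> = (\<Sum>p\<in>P. card {x\<in>X. (x,p)\<in>R})" by (simp add: card_cartesian_product)
  finally show ?thesis .
qed

lemma key_step:
  fixes \<delta> :: real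
  assumes "finite X" "finite P" "R \<subseteq> X \<times> P" "\<delta> > 0"
    "real (card R) \<ge> \<delta> * card X * card P" "real (card X) \<ge> 2 / \<delta>^2"
  shows "\<exists>x\<in>X. real (card {(y,p)\<in>R. y \<noteq> x \<and> (x,p)\<in>R}) \<ge> \<delta>^2/2 * card X * card P"
proof -
  define deg where "deg p = card {x\<in>X. (x,p)\<in>R}" for p
  define Nb where "Nb x = {p\<in>P. (x,p)\<in>R}" for x
  have cR: "card R = (\<Sum>p\<in>P. deg p)" unfolding deg_def by (rule card_rel_sum[OF assms(1-3)])
  have e1: "card (R \<inter> (X \<times> Nb x)) = (\<Sum>p\<in>Nb x. deg p)" for x
  proof -
    have "card (R \<inter> (X \<times> Nb x)) = (\<Sum>p\<in>Nb x. card {y\<in>X. (y,p)\<in>R \<inter> (X \<times> Nb x)})"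
      by (rule card_rel_sum) (use assms in \<open>auto simp: Nb_def\<close>)
    also have "\<dots> = (\<Sum>p\<in>Nb x. deg p)"
      by (rule sum.cong) (auto simp: deg_def Nb_def intro!: arg_cong[where f=card])
    finally show ?thesis .
  qed
  have sumswap: "(\<Sum>x\<in>X. real (\<Sum>p\<in>Nb x. deg p)) = (\<Sum>p\<in>P. real (deg p) ^ 2)"
  proof -
    have "(\<Sum>x\<in>X. real (\<Sum>p\<in>Nb x. deg p)) = (\<Sum>x\<in>X. \<Sum>p\<in>P. if (x,p)\<in>R then real (deg p) else 0)"
      unfolding Nb_def by (auto simp: sum.inter_filter[OF assms(2)] intro!: sum.cong)
    also have "\<dots> = (\<Sum>p\<in>P. \<Sum>x\<in>X. if (x,p)\<in>R then real (deg p) else 0)"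
      by (rule sum.swap)
    also have "\<dots> = (\<Sum>p\<in>P. real (deg p) * real (deg p))"
    proof (rule sum.cong)
      fix p assume "p \<in> P"
      have "(\<Sum>x\<in>X. if (x,p)\<in>R then real (deg p) else 0) = (\<Sum>x\<in>{x\<in>X. (x,p)\<in>R}. real (deg p))"
        by (rule sum.inter_filter[OF assms(1), symmetric])
      also have "\<dots> = real (deg p) * real (deg p)" by (simp add: deg_def)
      finally show "(\<Sum>x\<in>X. if (x,p)\<in>R then real (deg p) else 0) = real (deg p) * real (deg p)" .
    qed simp
    finally show ?thesis by (simp add: power2_eq_square)
  qed
  have cs: "(\<Sum>p\<in>P. real (deg p))^2 \<le> (\<Sum>p\<in>P. real (deg p)^2) * card P"
    by (rule sum_squared_le_sum_of_squares)
  have X0: "card X > 0" using assms(6,4) by (smt (verit) divide_pos_pos of_nat_0 of_nat_0_less_iff zero_less_power)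
  show ?thesis
  proof (cases "card P = 0")
    case True
    then obtain x where "x \<in> X" using X0 by fastforce
    thus ?thesis using True by force
  next
    case False
    hence P0: "card P > 0" by simp
  have "(\<delta> * card X * card P)^2 \<le> (\<Sum>p\<in>P. real (deg p))^2"
    using assms(5) cR assms(4) by (intro power_mono) auto
  hence "(\<delta> * card X * card P)^2 \<le> (\<Sum>p\<in>P. real (deg p)^2) * card P" using cs by linarith
  hence "(\<delta> * card X)^2 * card P \<le> (\<Sum>p\<in>P. real (deg p)^2)" using P0
    by (simp add: power2_eq_square mult_ac)
  hence big: "(\<delta> * card X)^2 * card P \<le> (\<Sum>x\<in>X. real (\<Sum>p\<in>Nb x. deg p))" using sumswap by simp
  obtain x where x: "x \<in> X" "real (\<Sum>p\<in>Nb x. deg p) \<ge> \<delta>^2 * card X * card P"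
  proof (rule ccontr)
    assume "\<not> thesis"
    hence "\<forall>x\<in>X. real (\<Sum>p\<in>Nb x. deg p) < \<delta>^2 * card X * card P" using that by force
    hence "(\<Sum>x\<in>X. real (\<Sum>p\<in>Nb x. deg p)) < (\<Sum>x\<in>X. \<delta>^2 * card X * card P)"
      using X0 assms(1) by (intro sum_strict_mono) auto
    thus False using big by (simp add: power2_eq_square mult_ac)
  qed
  have split: "R \<inter> (X \<times> Nb x) = {(y,p)\<in>R. y \<noteq> x \<and> (x,p)\<in>R} \<union> ({x} \<times> Nb x)"
    using assms(3) x(1) by (auto simp: Nb_def)
  have fin: "finite R" using assms(1-3) finite_subset by blast
  have "card (R \<inter> (X \<times> Nb x)) = card {(y,p)\<in>R. y \<noteq> x \<and> (x,p)\<in>R} + card ({x} \<times> Nb x)"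
    unfolding split by (rule card_Un_disjoint) (use fin assms(2) in \<open>auto simp: Nb_def intro: finite_subset[OF _ fin]\<close>)
  moreover have "card ({x} \<times> Nb x) \<le> card P"
    using assms(2) by (simp add: card_cartesian_product Nb_def card_mono)
  ultimately have "real (card {(y,p)\<in>R. y \<noteq> x \<and> (x,p)\<in>R}) \<ge> \<delta>^2 * card X * card P - card P"
    using x(2) e1[of x] by linarith
  moreover have "\<delta>^2 * card X * card P - card P \<ge> \<delta>^2/2 * card X * card P"
  proof -
    have "\<delta>^2 * card X \<ge> 2" using assms(6,4) by (simp add: field_simps)
    hence "\<delta>^2/2 * card X * card P \<ge> 1 * real (card P)" by (intro mult_right_mono) auto
    thus ?thesis by (simp add: algebra_simps)
  qed
  ultimately have "\<delta>^2/2 * card X * card P \<le> real (card {(y,p)\<in>R. y \<noteq> x \<and> (x,p)\<in>R})" by linarith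
  thus ?thesis using x(1) by blast
  qed
qed

lemma key:
  "\<forall>\<delta>::real>0. \<exists>N::nat. \<exists>\<delta>'::real>0. \<forall>(X::'a set) (P::'b set) R.
     finite X \<longrightarrow> finite P \<longrightarrow> card X \<ge> N \<longrightarrow> R \<subseteq> X \<times> P \<longrightarrow>
     real (card R) \<ge> \<delta> * card X * card P \<longrightarrow>
     (\<exists>S\<subseteq>X. card S = s \<and> real (card {p\<in>P. \<forall>x\<in>S. (x,p)\<in>R}) \<ge> \<delta>' * card P)"
proof (induction s)
  case 0
  show ?case
    apply (intro allI impI exI[of _ "0::nat"] exI[of _ "1::real"] conjI)
     apply simp
    apply (rule exI[of _ "{}"])
    apply simp
    done
next
  case (Suc s)
  show ?case
  proof (intro allI impI)
    fix \<delta>::real assume \<delta>: "\<delta> > 0"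
    define \<delta>2 where "\<delta>2 = \<delta>^2/2"
    have \<delta>2: "\<delta>2 > 0" using \<delta> by (simp add: \<delta>2_def)
    obtain N0 :: nat and \<delta>0 :: real where \<delta>0: "\<delta>0 > 0" and H: "\<forall>(X::'a set) (P::'b set) R.
     finite X \<longrightarrow> finite P \<longrightarrow> card X \<ge> N0 \<longrightarrow> R \<subseteq> X \<times> P \<longrightarrow>
     real (card R) \<ge> \<delta>2 * card X * card P \<longrightarrow>
     (\<exists>S\<subseteq>X. card S = s \<and> real (card {p\<in>P. \<forall>x\<in>S. (x,p)\<in>R}) \<ge> \<delta>0 * card P)"
      using Suc.IH[rule_format, OF \<delta>2] by (elim exE conjE) (rule that)
    define N where "N = max (N0 + 1) (nat \<lceil>2/\<delta>^2\<rceil>)"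
    show "\<exists>N::nat. \<exists>\<delta>'::real>0. \<forall>(X::'a set) (P::'b set) R.
     finite X \<longrightarrow> finite P \<longrightarrow> card X \<ge> N \<longrightarrow> R \<subseteq> X \<times> P \<longrightarrow>
     real (card R) \<ge> \<delta> * card X * card P \<longrightarrow>
     (\<exists>S\<subseteq>X. card S = Suc s \<and> real (card {p\<in>P. \<forall>x\<in>S. (x,p)\<in>R}) \<ge> \<delta>' * card P)"
    proof (intro exI[of _ N] exI[of _ "\<delta>0 * \<delta>2"] conjI allI impI)
      show "\<delta>0 * \<delta>2 > 0" using \<delta>0 \<delta>2 by simp
      fix X :: "'a set" and P :: "'b set" and R
      assume X: "finite X" and P: "finite P" and NX: "card X \<ge> N" and RX: "R \<subseteq> X \<times> P"
        and dens: "real (card R) \<ge> \<delta> * card X * card P"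
      have "real (card X) \<ge> 2/\<delta>^2"
      proof -
        have "card X \<ge> nat \<lceil>2/\<delta>^2\<rceil>" using NX by (simp add: N_def)
        hence "real (card X) \<ge> real (nat \<lceil>2/\<delta>^2\<rceil>)" by linarith
        moreover have "real (nat \<lceil>2/\<delta>^2\<rceil>) \<ge> 2/\<delta>^2" by linarith
        ultimately show ?thesis by linarith
      qed
      from key_step[OF X P RX \<delta> dens this] obtain x where x: "x \<in> X"
        and big: "real (card {(y,p)\<in>R. y \<noteq> x \<and> (x,p)\<in>R}) \<ge> \<delta>^2/2 * card X * card P" by blast
      define Rx where "Rx = {(y,p)\<in>R. y \<noteq> x \<and> (x,p)\<in>R}"
      define Nx where "Nx = {p\<in>P. (x,p)\<in>R}"
      have big': "real (card Rx) \<ge> \<delta>2 * card X * card P" using big by (simp add: Rx_def \<delta>2_def)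
      have RxS: "Rx \<subseteq> (X - {x}) \<times> Nx" using RX by (auto simp: Rx_def Nx_def)
      have finX': "finite (X - {x})" using X by simp
      have finNx: "finite Nx" using P by (simp add: Nx_def)
      have cX': "card (X - {x}) \<ge> N0" using NX x X by (simp add: N_def; linarith)
      have cX'le: "card (X - {x}) \<le> card X" using X by (simp add: card_mono)
      have cNx: "card Nx \<le> card P" using P by (auto simp: Nx_def intro: card_mono)
      have X0: "card X > 0" using x X card_gt_0_iff by blast
      have "card Rx \<le> card (X - {x}) * card Nx"
        using card_mono[OF _ RxS] finX' finNx by (simp add: card_cartesian_product)
      also have "\<dots> \<le> card X * card Nx" using cX'le by simp
      finally have "real (card Rx) \<le> real (card X) * real (card Nx)" by (simp flip: of_nat_mult)
      hence "real (card X) * (\<delta>2 * card P) \<le> real (card X) * card Nx" using big' by (simp add: mult_ac)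
      hence NxP: "\<delta>2 * card P \<le> card Nx" using X0 by (simp add: mult_le_cancel_left_pos)
      have "\<delta>2 * card (X - {x}) * card Nx \<le> \<delta>2 * card X * card P"
        using \<delta>2 cX'le cNx by (intro mult_mono) auto
      hence densx: "real (card Rx) \<ge> \<delta>2 * card (X - {x}) * card Nx" using big' by linarith
      from H[rule_format, OF finX' finNx cX' RxS densx] obtain S0 where
        S0: "S0 \<subseteq> X - {x}" "card S0 = s" and S0c: "real (card {p\<in>Nx. \<forall>y\<in>S0. (y,p)\<in>Rx}) \<ge> \<delta>0 * card Nx"
        by blast
      define S where "S = insert x S0"
      have SX: "S \<subseteq> X" using S0 x by (auto simp: S_def)
      have finS0: "finite S0" using S0 X finite_subset by blast
      have "x \<notin> S0" using S0 by auto
      hence cS: "card S = Suc s" using S0 finS0 by (simp add: S_def)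
      have sub: "{p\<in>Nx. \<forall>y\<in>S0. (y,p)\<in>Rx} \<subseteq> {p\<in>P. \<forall>y\<in>S. (y,p)\<in>R}"
        by (auto simp: Nx_def Rx_def S_def)
      have "card {p\<in>Nx. \<forall>y\<in>S0. (y,p)\<in>Rx} \<le> card {p\<in>P. \<forall>y\<in>S. (y,p)\<in>R}"
        by (rule card_mono[OF _ sub]) (use P in simp)
      moreover have "\<delta>0 * \<delta>2 * card P \<le> \<delta>0 * card Nx" using NxP \<delta>0
        by (simp add: mult.assoc)
      ultimately have "real (card {p\<in>P. \<forall>y\<in>S. (y,p)\<in>R}) \<ge> \<delta>0 * \<delta>2 * card P"
        using S0c by linarith
      thus "\<exists>S\<subseteq>X. card S = Suc s \<and> real (card {p\<in>P. \<forall>x\<in>S. (x,p)\<in>R}) \<ge> \<delta>0 * \<delta>2 * card P"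
        using SX cS by blast
    qed
  qed
qed


lemma kst3:
  fixes \<delta> :: real
  assumes "\<delta> > 0"
  shows "\<exists>N::nat. \<forall>(X::'a set) (Y::'b set) (Z::'c set) Q.
     finite X \<longrightarrow> finite Y \<longrightarrow> finite Z \<longrightarrow> card X \<ge> N \<longrightarrow> card Y \<ge> N \<longrightarrow> card Z \<ge> N \<longrightarrow>
     real (card {(x,y,z). x\<in>X \<and> y\<in>Y \<and> z\<in>Z \<and> Q x y z}) \<ge> \<delta> * card X * card Y * card Z \<longrightarrow>
     (\<exists>S T W. S\<subseteq>X \<and> T\<subseteq>Y \<and> W\<subseteq>Z \<and> card S = s \<and> card T = s \<and> card W = s \<and>
        (\<forall>x\<in>S. \<forall>y\<in>T. \<forall>z\<in>W. Q x y z))"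
proof -
  obtain N1 :: nat and \<delta>1 :: real where \<delta>1: "\<delta>1 > 0" and K1: "\<forall>(X::'a set) (P::('b\<times>'c) set) R.
     finite X \<longrightarrow> finite P \<longrightarrow> card X \<ge> N1 \<longrightarrow> R \<subseteq> X \<times> P \<longrightarrow>
     real (card R) \<ge> \<delta> * card X * card P \<longrightarrow>
     (\<exists>S\<subseteq>X. card S = s \<and> real (card {p\<in>P. \<forall>x\<in>S. (x,p)\<in>R}) \<ge> \<delta>1 * card P)"
    using key[of s, rule_format, OF assms] by (elim exE conjE) (rule that)
  obtain N2 :: nat and \<delta>2 :: real where \<delta>2: "\<delta>2 > 0" and K2: "\<forall>(X::'b set) (P::'c set) R.
     finite X \<longrightarrow> finite P \<longrightarrow> card X \<ge> N2 \<longrightarrow> R \<subseteq> X \<times> P \<longrightarrow>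
     real (card R) \<ge> \<delta>1 * card X * card P \<longrightarrow>
     (\<exists>S\<subseteq>X. card S = s \<and> real (card {p\<in>P. \<forall>x\<in>S. (x,p)\<in>R}) \<ge> \<delta>2 * card P)"
    using key[of s, rule_format, OF \<delta>1] by (elim exE conjE) (rule that)
  define N where "N = max N1 (max N2 (nat \<lceil>s/\<delta>2\<rceil>))"
  show ?thesis
  proof (intro exI[of _ N] allI impI)
    fix X :: "'a set" and Y :: "'b set" and Z :: "'c set" and Q
    assume X: "finite X" and Y: "finite Y" and Z: "finite Z" and NX: "card X \<ge> N" and NY: "card Y \<ge> N"
      and NZ: "card Z \<ge> N"
      and dens: "real (card {(x,y,z). x\<in>X \<and> y\<in>Y \<and> z\<in>Z \<and> Q x y z}) \<ge> \<delta> * card X * card Y * card Z"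
    define R where "R = {(x,y,z). x\<in>X \<and> y\<in>Y \<and> z\<in>Z \<and> Q x y z}"
    have RS: "R \<subseteq> X \<times> (Y \<times> Z)" by (auto simp: R_def)
    have cYZ: "real (card (Y \<times> Z)) = real (card Y) * real (card Z)" by (simp add: card_cartesian_product)
    have dens1: "real (card R) \<ge> \<delta> * card X * card (Y \<times> Z)"
      using dens unfolding R_def cYZ by (simp add: mult_ac)
    from K1[rule_format, OF X finite_cartesian_product[OF Y Z] _ RS dens1] NX
    obtain S where S: "S \<subseteq> X" "card S = s"
      and Sc: "real (card {p\<in>Y \<times> Z. \<forall>x\<in>S. (x,p)\<in>R}) \<ge> \<delta>1 * card (Y \<times> Z)"
      by (auto simp: N_def)
    define C where "C = {p\<in>Y \<times> Z. \<forall>x\<in>S. (x,p)\<in>R}"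
    have CS: "C \<subseteq> Y \<times> Z" by (auto simp: C_def)
    have dens2: "real (card C) \<ge> \<delta>1 * card Y * card Z" using Sc unfolding C_def cYZ by (simp add: mult_ac)
    from K2[rule_format, OF Y Z _ CS dens2] NY
    obtain T where T: "T \<subseteq> Y" "card T = s"
      and Tc: "real (card {z\<in>Z. \<forall>y\<in>T. (y,z)\<in>C}) \<ge> \<delta>2 * card Z"
      by (auto simp: N_def)
    have "real (card Z) \<ge> s/\<delta>2"
    proof -
      have "card Z \<ge> nat \<lceil>s/\<delta>2\<rceil>" using NZ by (simp add: N_def)
      hence "real (card Z) \<ge> real (nat \<lceil>s/\<delta>2\<rceil>)" by linarith
      moreover have "real (nat \<lceil>s/\<delta>2\<rceil>) \<ge> s/\<delta>2" by linarith
      ultimately show ?thesis by linarith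
    qed
    hence "\<delta>2 * card Z \<ge> s" using \<delta>2 by (simp add: field_simps)
    hence "s \<le> card {z\<in>Z. \<forall>y\<in>T. (y,z)\<in>C}" using Tc by linarith
    then obtain W where W: "W \<subseteq> {z\<in>Z. \<forall>y\<in>T. (y,z)\<in>C}" "card W = s"
      by (meson obtain_subset_with_card_n)
    have "\<forall>x\<in>S. \<forall>y\<in>T. \<forall>z\<in>W. Q x y z"
    proof (intro ballI)
      fix x y z assume "x \<in> S" "y \<in> T" "z \<in> W"
      hence "(y,z) \<in> C" using W by auto
      hence "(x,(y,z)) \<in> R" using \<open>x \<in> S\<close> by (auto simp: C_def)
      thus "Q x y z" by (simp add: R_def)
    qed
    moreover have "W \<subseteq> Z" using W by auto
    ultimately show "\<exists>S T W. S\<subseteq>X \<and> T\<subseteq>Y \<and> W\<subseteq>Z \<and> card S = s \<and> card T = s \<and> card W = s \<and>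
        (\<forall>x\<in>S. \<forall>y\<in>T. \<forall>z\<in>W. Q x y z)" using S T W by blast
  qed
qed



definition InvR :: "real \<Rightarrow> real \<Rightarrow> real \<Rightarrow> real \<Rightarrow> real \<Rightarrow> real \<Rightarrow> bool" where
  "InvR A B C s1 s2 s3 \<longleftrightarrow> s2 - s1 \<ge> -2*C \<and> s3 - s2 \<ge> -2*C \<and> B*s1 - A*s2 \<ge> -2*C \<and> C*s2 - B*s3 \<ge> -2*C"

lemma strat_real:
  fixes A B C s1 s2 s3 :: real
  assumes A1: "1 \<le> A" and AB: "A \<le> B" and BC: "B \<le> C" and ABd: "B = A \<or> A + 1 \<le> B" and BCd: "C = B \<or> B + 1 \<le> C"
    and I: "InvR A B C s1 s2 s3" and L1: "4*C*C \<le> s1" and L2: "4*C*C \<le> s2" and L3: "4*C*C \<le> s3"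
  shows "InvR A B C (s1-A) (s2-B) (s3-C) \<or> InvR A B C (s1-A) (s2-C) (s3-B) \<or>
         InvR A B C (s1-B) (s2-A) (s3-C) \<or> InvR A B C (s1-B) (s2-C) (s3-A) \<or>
         InvR A B C (s1-C) (s2-A) (s3-B) \<or> InvR A B C (s1-C) (s2-B) (s3-A)"
proof -
  have I1: "s2 - s1 \<ge> -2*C" and I2: "s3 - s2 \<ge> -2*C" and I3: "B*s1 - A*s2 \<ge> -2*C" and I4: "C*s2 - B*s3 \<ge> -2*C"
    using I by (auto simp: InvR_def)
  have s1p: "s1 \<ge> 0" and s2p: "s2 \<ge> 0" using L1 L2 A1 AB BC by (smt (verit) mult_nonneg_nonneg)+
  have cAC: "A*C \<le> C*C" "B*C \<le> C*C" "B*B \<le> C*C" "A*B \<le> C*C" "A*A \<le> C*C" "0 \<le> A*A" "0 \<le> A*B" "0 \<le> A*C" "0 \<le> B*C" "0 \<le> B*B" "A*C \<le> B*C" "A*A \<le> A*B" "A*B \<le> B*B" "A*B \<le> A*C" "B*B \<le> B*C"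
    using A1 AB BC by (auto intro: mult_mono mult_nonneg_nonneg)
  have eqAB: "B*s1 = A*s1 \<and> B*s2 = A*s2 \<and> B*s3 = A*s3 \<and> B*C = A*C \<and> B*B = A*A \<and> A*B = A*A" if "B = A"
    using that by simp
  have eqBC: "C*s1 = B*s1 \<and> C*s2 = B*s2 \<and> C*s3 = B*s3 \<and> C*C = B*B \<and> B*C = B*B \<and> A*C = A*B" if "C = B"
    using that by simp
  have Cp: "C \<ge> 1" using A1 AB BC by simp
  have L1': "s1 \<ge> 4*(C*C)" and L2': "s2 \<ge> 4*(C*C)" and L3': "s3 \<ge> 4*(C*C)" using L1 L2 L3 by (simp_all add: mult.assoc)
  have g1big: "B*s1 - A*s2 \<ge> s1 - A*C" if "A + 1 \<le> B" "s2 - s1 < C"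
  proof -
    have "(B - A - 1) * s1 \<ge> 0" using that s1p by simp
    moreover have "A * (s2 - s1) \<le> A * C" using that A1 by (intro mult_left_mono) auto
    ultimately show ?thesis by (simp add: algebra_simps)
  qed
  have g2big: "C*s2 - B*s3 \<ge> s2 - B*C" if "B + 1 \<le> C" "s3 - s2 < C"
  proof -
    have "(C - B - 1) * s2 \<ge> 0" using that s2p by simp
    moreover have "B * (s3 - s2) \<le> B * C" using that A1 AB by (intro mult_left_mono) auto
    ultimately show ?thesis by (simp add: algebra_simps)
  qed
  show ?thesis
  proof (cases "s2 - s1 \<ge> C")
    case f1: True
    show ?thesis
    proof (cases "s3 - s2 \<ge> C")
      case True
      have "InvR A B C (s1-A) (s2-B) (s3-C)"
        unfolding InvR_def apply (simp add: algebra_simps) apply ((intro impI conjI)?; use f1 True I3 I4 A1 AB BC I1 I2 I3 I4 cAC Cp L1' L2' L3' A1 AB BC in linarith) done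
      thus ?thesis by blast
    next
      case f2: False
      have "C*s2 - B*s3 - (C*C - B*B) \<ge> -2*C"
        using BCd
      proof
        assume "C = B" thus ?thesis using I4 by simp
      next
        assume h: "B + 1 \<le> C"
        have "C*s2 - B*s3 \<ge> s2 - B*C" using g2big[OF h] f2 by simp
        thus ?thesis using cAC L2' Cp by linarith
      qed
      hence "InvR A B C (s1-A) (s2-C) (s3-B)"
        unfolding InvR_def apply (simp add: algebra_simps) apply ((intro impI conjI)?; use f1 f2 I3 I4 A1 AB BC cAC I1 I2 I3 I4 cAC Cp L1' L2' L3' A1 AB BC in linarith) done
      thus ?thesis by blast
    qed
  next
    case f1: False
    show ?thesis
    proof (cases "s3 - s2 \<ge> C")
      case f2: True
      have "B*s1 - A*s2 - (B*B - A*A) \<ge> -2*C"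
        using ABd
      proof
        assume "B = A" thus ?thesis using I3 by simp
      next
        assume h: "A + 1 \<le> B"
        have "B*s1 - A*s2 \<ge> s1 - A*C" using g1big[OF h] f1 by simp
        thus ?thesis using cAC L1' Cp by linarith
      qed
      hence "InvR A B C (s1-B) (s2-A) (s3-C)"
        unfolding InvR_def apply (simp add: algebra_simps) apply ((intro impI conjI)?; use f1 f2 I1 I3 I4 A1 AB BC cAC I1 I2 I3 I4 cAC Cp L1' L2' L3' A1 AB BC in linarith) done
      thus ?thesis by blast
    next
      case f2: False
      consider "B = A" "C = B" | "A + 1 \<le> B" "B + 1 \<le> C" | "B = A" "B + 1 \<le> C" | "A + 1 \<le> B" "C = B"
        using ABd BCd by blast
      thus ?thesis
      proof cases
        case 1
        have "InvR A B C (s1-A) (s2-B) (s3-C)"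
          unfolding InvR_def apply (simp add: algebra_simps) apply ((intro impI conjI)?; use 1 I1 I2 I3 I4 I1 I2 I3 I4 cAC Cp L1' L2' L3' A1 AB BC eqAB[OF 1(1)] eqBC[OF 1(2)] in linarith) done
        thus ?thesis by blast
      next
        case 2
        have "B*s1 - A*s2 \<ge> s1 - A*C" using g1big 2 f1 by simp
        moreover have "C*s2 - B*s3 \<ge> s2 - B*C" using g2big 2 f2 by simp
        ultimately have "InvR A B C (s1-C) (s2-B) (s3-A)"
          unfolding InvR_def apply (simp add: algebra_simps) apply ((intro impI conjI)?; use 2 I1 I2 cAC L1' L2' Cp AB BC I1 I2 I3 I4 cAC Cp L1' L2' L3' A1 AB BC in linarith) done
        thus ?thesis by blast
      next
        case 3
        have g2: "C*s2 - B*s3 \<ge> s2 - B*C" using g2big 3 f2 by simp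
        show ?thesis
        proof (cases "s2 - s1 \<ge> -2*C + C")
          case True
          have "InvR A B C (s1-A) (s2-C) (s3-B)"
            unfolding InvR_def apply (simp add: algebra_simps) apply ((intro impI conjI)?; use 3 True g2 I2 I3 cAC L2' Cp AB BC I1 I2 I3 I4 cAC Cp L1' L2' L3' A1 AB BC eqAB[OF 3(1)] in linarith) done
          thus ?thesis by blast
        next
          case False
          have "A*(s2 - s1 + C - A) \<le> A * (-A)" using False A1 by (intro mult_left_mono) auto
          hence "InvR A B C (s1-C) (s2-A) (s3-B)"
            unfolding InvR_def apply (simp add: algebra_simps) apply ((intro impI conjI)?; use 3 False g2 I1 I2 I3 cAC L2' Cp AB BC I1 I2 I3 I4 cAC Cp L1' L2' L3' A1 AB BC eqAB[OF 3(1)] in linarith) done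
          thus ?thesis by blast
        qed
      next
        case 4
        have g1: "B*s1 - A*s2 \<ge> s1 - A*C" using g1big 4 f1 by simp
        show ?thesis
        proof (cases "s3 - s2 \<ge> -2*C + (B - A)")
          case True
          have "InvR A B C (s1-B) (s2-A) (s3-C)"
            unfolding InvR_def apply (simp add: algebra_simps) apply ((intro impI conjI)?; use 4 True g1 I1 I4 cAC L1' Cp AB BC I1 I2 I3 I4 cAC Cp L1' L2' L3' A1 AB BC eqBC[OF 4(2)] in linarith) done
          thus ?thesis by blast
        next
          case False
          have "B*(s3 - s2 + B - A) \<le> B * 0" using False A1 AB BC 4 by (intro mult_left_mono) auto
          hence "InvR A B C (s1-B) (s2-C) (s3-A)"
            unfolding InvR_def apply (simp add: algebra_simps) apply ((intro impI conjI)?; use 4 False g1 I1 I2 I4 cAC L1' Cp AB BC I1 I2 I3 I4 cAC Cp L1' L2' L3' A1 AB BC eqBC[OF 4(2)] in linarith) done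
          thus ?thesis by blast
        qed
      qed
    qed
  qed
qed


lemma strat_stop:
  fixes A B C s1 s2 s3 :: real
  assumes A1: "1 \<le> A" and AB: "A \<le> B" and BC: "B \<le> C"
    and I: "InvR A B C s1 s2 s3" and small: "s1 < 4*C*C \<or> s2 < 4*C*C \<or> s3 < 4*C*C"
  shows "s1 + s2 + s3 \<le> 3*(4*C*C) + 4*(2*C) + C*(4*C*C) + C*(C*(4*C*C) + 2*C)"
proof -
  define L where "L = 4*C*C"
  define K where "K = 2*C"
  have I1: "s2 - s1 \<ge> -K" and I2: "s3 - s2 \<ge> -K" and I3: "B*s1 - A*s2 \<ge> -K" and I4: "C*s2 - B*s3 \<ge> -K"
    using I by (auto simp: InvR_def K_def)
  have Cp: "C \<ge> 1" using A1 AB BC by simp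
  have Lp: "L \<ge> 0" "K \<ge> 0" using Cp by (simp_all add: L_def K_def)
  have CLp: "C*L \<ge> 0" using Cp Lp by simp
  have s2A: "s2 \<le> A*s2 \<or> s2 \<le> 0" using A1 by (cases "s2 \<ge> 0") (auto simp: mult_right_mono[of 1 A s2, simplified])
  have s3B: "s3 \<le> B*s3 \<or> s3 \<le> 0" using A1 AB by (cases "s3 \<ge> 0") (auto simp: mult_right_mono[of 1 B s3, simplified])
  have goal: "s1 + s2 + s3 \<le> 3*L + 4*K + C*L + C*(C*L + K)"
  proof -
    consider "s1 < L" | "s2 < L" | "s3 < L" using small by (auto simp: L_def)
    thus ?thesis
    proof cases
      case 1
      have "B*s1 \<le> B*L" using 1 A1 AB by (intro mult_left_mono) auto
      also have "\<dots> \<le> C*L" using BC Lp by (intro mult_right_mono) auto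
      finally have "A*s2 \<le> C*L + K" using I3 by linarith
      hence s2b: "s2 \<le> C*L + K" using s2A CLp Lp by linarith
      have "C*s2 \<le> C*(C*L+K)" using s2b Cp by (intro mult_left_mono) auto
      hence "B*s3 \<le> C*(C*L+K) + K" using I4 by linarith
      moreover have "C*(C*L+K) \<ge> 0" using Cp CLp Lp by simp
      ultimately have "s3 \<le> C*(C*L+K) + K" using s3B Lp by linarith
      thus ?thesis using 1 s2b Lp CLp by linarith
    next
      case 2
      have "C*s2 \<le> C*L" using 2 Cp by (intro mult_left_mono) auto
      hence "B*s3 \<le> C*L + K" using I4 by linarith
      hence "s3 \<le> C*L + K" using s3B CLp Lp by linarith
      moreover have "C*(C*L+K) \<ge> 0" using Cp CLp Lp by simp
      ultimately show ?thesis using 2 I1 Lp CLp by linarith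
    next
      case 3
      moreover have "C*(C*L+K) \<ge> 0" using Cp CLp Lp by simp
      ultimately show ?thesis using I1 I2 Lp CLp by linarith
    qed
  qed
  thus ?thesis by (simp add: L_def K_def)
qed



definition moves :: "nat \<Rightarrow> nat \<Rightarrow> nat \<Rightarrow> (nat \<times> nat \<times> nat) set" where
  "moves a b c = {(a,b,c),(a,c,b),(b,a,c),(b,c,a),(c,a,b),(c,b,a)}"

lemma copy_from_complete:
  assumes d12: "T1 \<inter> T2 = {}" and d13: "T1 \<inter> T3 = {}" and d23: "T2 \<inter> T3 = {}"
    and fin: "finite T1" "finite T2" "finite T3"
    and sub: "T1 \<union> T2 \<union> T3 \<subseteq> U"
    and comp: "\<forall>x\<in>T1. \<forall>y\<in>T2. \<forall>z\<in>T3. {x,y,z} \<in> H"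
    and mv: "(card T1, card T2, card T3) \<in> moves a b c"
  shows "\<exists>Y. is_Kabc_copy H U a b c Y \<and> copy_verts Y = T1 \<union> T2 \<union> T3"
proof -
  have e: "{x,y,z} \<in> H" "{x,z,y} \<in> H" "{y,x,z} \<in> H" "{y,z,x} \<in> H" "{z,x,y} \<in> H" "{z,y,x} \<in> H"
    if "x \<in> T1" "y \<in> T2" "z \<in> T3" for x y z
    using comp that by (auto simp: insert_commute)
  from mv consider "card T1 = a" "card T2 = b" "card T3 = c" | "card T1 = a" "card T2 = c" "card T3 = b"
    | "card T1 = b" "card T2 = a" "card T3 = c" | "card T1 = b" "card T2 = c" "card T3 = a"
    | "card T1 = c" "card T2 = a" "card T3 = b" | "card T1 = c" "card T2 = b" "card T3 = a"
    unfolding moves_def by auto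
  thus ?thesis
  proof cases
    case 1 thus ?thesis using assms e
      by (intro exI[of _ "(T1,T2,T3)"]) (auto simp: is_Kabc_copy_def copy_verts_def)
  next
    case 2 thus ?thesis using assms e
      by (intro exI[of _ "(T1,T3,T2)"]) (auto simp: is_Kabc_copy_def copy_verts_def)
  next
    case 3 thus ?thesis using assms e
      by (intro exI[of _ "(T2,T1,T3)"]) (auto simp: is_Kabc_copy_def copy_verts_def)
  next
    case 4 thus ?thesis using assms e
      by (intro exI[of _ "(T3,T1,T2)"]) (auto simp: is_Kabc_copy_def copy_verts_def)
  next
    case 5 thus ?thesis using assms e
      by (intro exI[of _ "(T2,T3,T1)"]) (auto simp: is_Kabc_copy_def copy_verts_def)
  next
    case 6 thus ?thesis using assms e
      by (intro exI[of _ "(T3,T2,T1)"]) (auto simp: is_Kabc_copy_def copy_verts_def)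
  qed
qed


lemma tiling_ind:
  fixes H :: "'a set set" and \<epsilon> \<beta> :: real
  assumes d12: "V1 \<inter> V2 = {}" and d13: "V1 \<inter> V3 = {}" and d23: "V2 \<inter> V3 = {}"
    and fV: "finite V1" "finite V2" "finite V3"
    and kst: "\<forall>R1 R2 R3. R1 \<subseteq> V1 \<longrightarrow> R2 \<subseteq> V2 \<longrightarrow> R3 \<subseteq> V3 \<longrightarrow>
       real (card R1) \<ge> \<epsilon> * card V1 \<longrightarrow> real (card R2) \<ge> \<epsilon> * card V2 \<longrightarrow> real (card R3) \<ge> \<epsilon> * card V3 \<longrightarrow>
       card R1 \<ge> N0 \<longrightarrow> card R2 \<ge> N0 \<longrightarrow> card R3 \<ge> N0 \<longrightarrow>
       (\<exists>S1 S2 S3. S1 \<subseteq> R1 \<and> S2 \<subseteq> R2 \<and> S3 \<subseteq> R3 \<and> card S1 = c \<and> card S2 = c \<and> card S3 = c \<and>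
          (\<forall>x\<in>S1. \<forall>y\<in>S2. \<forall>z\<in>S3. {x,y,z} \<in> H))"
    and abc: "0 < a" "a \<le> b" "b \<le> c"
    and step: "\<forall>r1 r2 r3. P r1 r2 r3 \<longrightarrow> real (r1 + r2 + r3) \<le> \<beta> \<or>
       (real r1 \<ge> \<epsilon> * card V1 \<and> real r2 \<ge> \<epsilon> * card V2 \<and> real r3 \<ge> \<epsilon> * card V3 \<and>
        r1 \<ge> N0 \<and> r2 \<ge> N0 \<and> r3 \<ge> N0 \<and>
        (\<exists>k1 k2 k3. (k1,k2,k3) \<in> moves a b c \<and> k1 \<le> r1 \<and> k2 \<le> r2 \<and> k3 \<le> r3 \<and>
            P (r1-k1) (r2-k2) (r3-k3)))"
  shows "R1 \<subseteq> V1 \<Longrightarrow> R2 \<subseteq> V2 \<Longrightarrow> R3 \<subseteq> V3 \<Longrightarrow> P (card R1) (card R2) (card R3) \<Longrightarrow>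
    \<exists>\<T>. is_Kabc_tiling H (V1 \<union> V2 \<union> V3) a b c \<T> \<and> (\<Union>Y\<in>\<T>. copy_verts Y) \<subseteq> R1 \<union> R2 \<union> R3 \<and>
      real (card ((R1 \<union> R2 \<union> R3) - (\<Union>Y\<in>\<T>. copy_verts Y))) \<le> \<beta>"
proof (induction "card R1 + card R2 + card R3" arbitrary: R1 R2 R3 rule: less_induct)
  case less
  have fR: "finite R1" "finite R2" "finite R3" using less.prems fV finite_subset by blast+
  from step[rule_format, OF less.prems(4)] show ?case
  proof
    assume sm: "real (card R1 + card R2 + card R3) \<le> \<beta>"
    have "card (R1 \<union> R2 \<union> R3) \<le> card R1 + card R2 + card R3"
      by (meson card_Un_le le_trans add_le_mono order_refl)
    hence "real (card ((R1 \<union> R2 \<union> R3) - (\<Union>Y\<in>{}. copy_verts Y))) \<le> \<beta>" using sm by simp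
    thus ?thesis by (intro exI[of _ "{}"]) (auto simp: is_Kabc_tiling_def)
  next
    assume "real (card R1) \<ge> \<epsilon> * card V1 \<and> real (card R2) \<ge> \<epsilon> * card V2 \<and> real (card R3) \<ge> \<epsilon> * card V3 \<and>
        card R1 \<ge> N0 \<and> card R2 \<ge> N0 \<and> card R3 \<ge> N0 \<and>
        (\<exists>k1 k2 k3. (k1,k2,k3) \<in> moves a b c \<and> k1 \<le> card R1 \<and> k2 \<le> card R2 \<and> k3 \<le> card R3 \<and>
            P (card R1-k1) (card R2-k2) (card R3-k3))"
    then obtain k1 k2 k3 where big: "real (card R1) \<ge> \<epsilon> * card V1" "real (card R2) \<ge> \<epsilon> * card V2"
      "real (card R3) \<ge> \<epsilon> * card V3" "card R1 \<ge> N0" "card R2 \<ge> N0" "card R3 \<ge> N0"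
      and mv: "(k1,k2,k3) \<in> moves a b c" and kle: "k1 \<le> card R1" "k2 \<le> card R2" "k3 \<le> card R3"
      and Pn: "P (card R1-k1) (card R2-k2) (card R3-k3)" by blast
    from kst[rule_format, OF less.prems(1-3) big] obtain S1 S2 S3 where
      S: "S1 \<subseteq> R1" "S2 \<subseteq> R2" "S3 \<subseteq> R3" "card S1 = c" "card S2 = c" "card S3 = c"
      and comp: "\<forall>x\<in>S1. \<forall>y\<in>S2. \<forall>z\<in>S3. {x,y,z} \<in> H" by blast
    have kc: "k1 \<le> c" "k2 \<le> c" "k3 \<le> c" "0 < k1" using mv abc by (auto simp: moves_def)
    obtain T1 where T1: "T1 \<subseteq> S1" "card T1 = k1" "finite T1" using obtain_subset_with_card_n[of k1 S1] kc S by metis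
    obtain T2 where T2: "T2 \<subseteq> S2" "card T2 = k2" "finite T2" using obtain_subset_with_card_n[of k2 S2] kc S by metis
    obtain T3 where T3: "T3 \<subseteq> S3" "card T3 = k3" "finite T3" using obtain_subset_with_card_n[of k3 S3] kc S by metis
    have TR: "T1 \<subseteq> R1" "T2 \<subseteq> R2" "T3 \<subseteq> R3" using T1 T2 T3 S by auto
    have TV: "T1 \<subseteq> V1" "T2 \<subseteq> V2" "T3 \<subseteq> V3" using TR less.prems by auto
    obtain Y where Y: "is_Kabc_copy H (V1 \<union> V2 \<union> V3) a b c Y" "copy_verts Y = T1 \<union> T2 \<union> T3"
    proof -
      have "\<exists>Y. is_Kabc_copy H (V1 \<union> V2 \<union> V3) a b c Y \<and> copy_verts Y = T1 \<union> T2 \<union> T3"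
      proof (rule copy_from_complete)
        show "\<forall>x\<in>T1. \<forall>y\<in>T2. \<forall>z\<in>T3. {x,y,z} \<in> H" using comp T1 T2 T3 by blast
        show "(card T1, card T2, card T3) \<in> moves a b c" using mv T1 T2 T3 by simp
      qed (use TV d12 d13 d23 T1 T2 T3 in auto)
      thus ?thesis using that by blast
    qed
    define X where "X = T1 \<union> T2 \<union> T3"
    define R1' where "R1' = R1 - X"
    define R2' where "R2' = R2 - X"
    define R3' where "R3' = R3 - X"
    have R1'eq: "R1' = R1 - T1" using TV less.prems d12 d13 d23 by (auto simp: R1'_def X_def)
    have R2'eq: "R2' = R2 - T2" using TV less.prems d12 d13 d23 by (auto simp: R2'_def X_def)
    have R3'eq: "R3' = R3 - T3" using TV less.prems d12 d13 d23 by (auto simp: R3'_def X_def)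
    have c1: "card R1' = card R1 - k1" unfolding R1'eq using TR T1 fR by (simp add: card_Diff_subset)
    have c2: "card R2' = card R2 - k2" unfolding R2'eq using TR T2 fR by (simp add: card_Diff_subset)
    have c3: "card R3' = card R3 - k3" unfolding R3'eq using TR T3 fR by (simp add: card_Diff_subset)
    have lt: "card R1' + card R2' + card R3' < card R1 + card R2 + card R3"
      using c1 c2 c3 kle kc by linarith
    have P': "P (card R1') (card R2') (card R3')" using Pn c1 c2 c3 by simp
    have sub': "R1' \<subseteq> V1" "R2' \<subseteq> V2" "R3' \<subseteq> V3" using less.prems by (auto simp: R1'_def R2'_def R3'_def)
    from less.hyps[OF lt sub' P'] obtain \<T>' where
      T': "is_Kabc_tiling H (V1 \<union> V2 \<union> V3) a b c \<T>'" "(\<Union>Y\<in>\<T>'. copy_verts Y) \<subseteq> R1' \<union> R2' \<union> R3'"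
      "real (card ((R1' \<union> R2' \<union> R3') - (\<Union>Y\<in>\<T>'. copy_verts Y))) \<le> \<beta>" by blast
    have disjX: "copy_verts Z \<inter> X = {}" if "Z \<in> \<T>'" for Z
      using T'(2) that by (auto simp: R1'_def R2'_def R3'_def)
    have til: "is_Kabc_tiling H (V1 \<union> V2 \<union> V3) a b c (insert Y \<T>')"
      using T'(1) Y disjX unfolding is_Kabc_tiling_def X_def
      by (metis Int_commute insert_iff)
    have un: "(\<Union>Z\<in>insert Y \<T>'. copy_verts Z) \<subseteq> R1 \<union> R2 \<union> R3"
      using T'(2) Y(2) TR by (auto simp: R1'_def R2'_def R3'_def)
    have "(R1 \<union> R2 \<union> R3) - (\<Union>Z\<in>insert Y \<T>'. copy_verts Z) = (R1' \<union> R2' \<union> R3') - (\<Union>Y\<in>\<T>'. copy_verts Y)"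
      using Y(2) by (auto simp: R1'_def R2'_def R3'_def X_def)
    thus ?thesis using til un T'(3) by metis
  qed
qed



definition bnd :: "real \<Rightarrow> real" where
  "bnd C = 3*(4*C*C) + 4*(2*C) + C*(4*C*C) + C*(C*(4*C*C) + 2*C)"

lemma bnd_nonneg: "C \<ge> 0 \<Longrightarrow> bnd C \<ge> 0"
  unfolding bnd_def by simp

lemma dens_to_count:
  fixes \<epsilon> :: real and H :: "'a set set"
  assumes "finite A1" "finite A2" "finite A3" "card A1 > 0" "card A2 > 0" "card A3 > 0"
    "density H A1 A2 A3 \<ge> \<epsilon>"
  shows "real (card {(x,y,z). x\<in>A1 \<and> y\<in>A2 \<and> z\<in>A3 \<and> {x,y,z}\<in>H}) \<ge> \<epsilon> * card A1 * card A2 * card A3"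
proof -
  define Tr where "Tr = {(x,y,z). x\<in>A1 \<and> y\<in>A2 \<and> z\<in>A3 \<and> {x,y,z}\<in>H}"
  have fT: "finite Tr"
    by (rule finite_subset[of _ "A1 \<times> A2 \<times> A3"]) (use assms in \<open>auto simp: Tr_def\<close>)
  have "{e\<in>H. \<exists>x\<in>A1. \<exists>y\<in>A2. \<exists>z\<in>A3. e = {x, y, z}} \<subseteq> (\<lambda>(x,y,z). {x,y,z}) ` Tr"
    by (auto simp: Tr_def image_iff)
  hence "cross_edges H A1 A2 A3 \<le> card ((\<lambda>(x,y,z). {x,y,z}) ` Tr)"
    unfolding cross_edges_def by (intro card_mono finite_imageI fT)
  also have "\<dots> \<le> card Tr" by (rule card_image_le[OF fT])
  finally have ce: "real (cross_edges H A1 A2 A3) \<le> real (card Tr)" by simp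
  have pos: "real (card A1) * real (card A2) * real (card A3) > 0" using assms by simp
  have "\<epsilon> \<le> real (cross_edges H A1 A2 A3) / (real (card A1) * real (card A2) * real (card A3))"
    using assms(7) by (simp add: density_def)
  hence "\<epsilon> * (real (card A1) * real (card A2) * real (card A3)) \<le> real (cross_edges H A1 A2 A3)"
    using pos by (simp add: le_divide_eq)
  thus ?thesis using ce by (simp add: Tr_def mult_ac)
qed

lemma case_eps_big:
  fixes \<epsilon> :: real
  assumes "0 < a" "a \<le> c" "\<epsilon> \<ge> 1"
  shows "\<exists>\<T>. is_Kabc_tiling H (V1 \<union> V2 \<union> V3) a b c \<T> \<and>
        real (card ((V1 \<union> V2 \<union> V3) - (\<Union>T\<in>\<T>. copy_verts T)))
          \<le> real c / real a * \<epsilon> * real (card V1 + card V2 + card V3)"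
proof (intro exI[of _ "{}"] conjI)
  show "is_Kabc_tiling H (V1 \<union> V2 \<union> V3) a b c {}" by (simp add: is_Kabc_tiling_def)
  have "card (V1 \<union> V2 \<union> V3) \<le> card V1 + card V2 + card V3"
    by (meson card_Un_le le_trans add_le_mono order_refl)
  hence h: "real (card (V1 \<union> V2 \<union> V3)) \<le> real (card V1 + card V2 + card V3)" by linarith
  have "real c / real a \<ge> 1" using assms by simp
  hence "real c / real a * \<epsilon> \<ge> 1" using assms(3) by (metis mult_mono' mult_1 zero_le_one)
  hence "1 * real (card V1 + card V2 + card V3) \<le> real c / real a * \<epsilon> * real (card V1 + card V2 + card V3)"
    by (intro mult_right_mono) auto
  thus "real (card ((V1 \<union> V2 \<union> V3) - (\<Union>T\<in>{}. copy_verts T)))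
          \<le> real c / real a * \<epsilon> * real (card V1 + card V2 + card V3)" using h by simp
qed


lemma core:
  fixes a b c N0 :: nat and \<epsilon> d :: real and H :: "'a set set" and V1 V2 V3 :: "'a set"
  assumes a0: "0 < a" and ab: "a \<le> b" and bc: "b \<le> c" and e0: "0 < \<epsilon>" and e1: "\<epsilon> < 1" and ed: "2*\<epsilon> \<le> d"
    and KST: "\<forall>(X::'a set) (Y::'a set) (Z::'a set) Q.
     finite X \<longrightarrow> finite Y \<longrightarrow> finite Z \<longrightarrow> card X \<ge> N0 \<longrightarrow> card Y \<ge> N0 \<longrightarrow> card Z \<ge> N0 \<longrightarrow>
     real (card {(x,y,z). x\<in>X \<and> y\<in>Y \<and> z\<in>Z \<and> Q x y z}) \<ge> \<epsilon> * card X * card Y * card Z \<longrightarrow>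
     (\<exists>S T W. S\<subseteq>X \<and> T\<subseteq>Y \<and> W\<subseteq>Z \<and> card S = c \<and> card T = c \<and> card W = c \<and>
        (\<forall>x\<in>S. \<forall>y\<in>T. \<forall>z\<in>W. Q x y z))"
    and N0c: "N0 \<ge> c"
    and fV: "finite V1" "finite V2" "finite V3"
    and d12: "V1 \<inter> V2 = {}" and d13: "V1 \<inter> V3 = {}" and d23: "V2 \<inter> V3 = {}"
    and reg: "eps_d_regular H \<epsilon> d V1 V2 V3"
    and o12: "card V1 \<le> card V2" and o23: "card V2 \<le> card V3"
    and r12: "real (card V1) / real a \<ge> real (card V2) / real b"
    and r23: "real (card V2) / real b \<ge> real (card V3) / real c"
    and large: "\<epsilon> * real (card V3) / real c \<ge> real N0 + bnd (real c)"
  shows "\<exists>\<T>. is_Kabc_tiling H (V1 \<union> V2 \<union> V3) a b c \<T> \<and>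
        real (card ((V1 \<union> V2 \<union> V3) - (\<Union>T\<in>\<T>. copy_verts T)))
          \<le> real c / real a * \<epsilon> * real (card V1 + card V2 + card V3)"
proof -
  define A where "A = real a"
  define B where "B = real b"
  define C where "C = real c"
  define n1 where "n1 = real (card V1)"
  define n2 where "n2 = real (card V2)"
  define n3 where "n3 = real (card V3)"
  have A1: "A \<ge> 1" using a0 by (simp add: A_def)
  have AB: "A \<le> B" using ab by (simp add: A_def B_def)
  have BC: "B \<le> C" using bc by (simp add: B_def C_def)
  have h1: "n2 * A \<le> n1 * B" using r12 A1 AB by (simp add: field_simps A_def B_def n1_def n2_def)
  have h2: "n3 * B \<le> n2 * C" using r23 A1 AB BC by (simp add: field_simps B_def C_def n2_def n3_def)
  have nn: "n1 \<ge> 0" "n2 \<ge> 0" "n3 \<ge> 0" by (simp_all add: n1_def n2_def n3_def)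
  have o12': "n1 \<le> n2" and o23': "n2 \<le> n3" using o12 o23 by (simp_all add: n1_def n2_def n3_def)
  have "B * (n1 * C) \<ge> B * (A * n3)"
  proof -
    have "B * (A * n3) = A * (n3 * B)" by (simp add: mult_ac)
    also have "\<dots> \<le> A * (n2 * C)" using h2 A1 by (intro mult_left_mono) auto
    also have "\<dots> = C * (n2 * A)" by (simp add: mult_ac)
    also have "\<dots> \<le> C * (n1 * B)" using h1 A1 AB BC by (intro mult_left_mono) auto
    also have "\<dots> = B * (n1 * C)" by (simp add: mult_ac)
    finally show ?thesis by (simp add: mult_ac)
  qed
  hence "n1 * C \<ge> A * n3" using A1 AB by (simp add: mult_le_cancel_left_pos)
  moreover have "A * n3 \<ge> n3" using A1 nn by (simp add: mult_right_mono[of 1 A n3, simplified])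
  ultimately have n1C: "n1 * C \<ge> n3" by linarith
  have Cp: "C \<ge> 1" using A1 AB BC by simp
  have bnd0: "bnd C \<ge> 0" using Cp bnd_nonneg by simp
  have large': "\<epsilon> * n3 / C \<ge> real N0 + bnd C" using large by (simp add: n3_def C_def)
  have "\<epsilon> * n1 \<ge> \<epsilon> * n3 / C"
  proof -
    have "\<epsilon> * n3 \<le> \<epsilon> * (n1 * C)" using n1C e0 by (intro mult_left_mono) auto
    thus ?thesis using Cp by (simp add: divide_le_eq mult_ac)
  qed
  hence L1: "\<epsilon> * n1 \<ge> real N0 + bnd C" using large' by linarith
  have L2: "\<epsilon> * n2 \<ge> real N0 + bnd C" using L1 o12' e0 by (smt (verit) mult_left_mono)
  have L3: "\<epsilon> * n3 \<ge> real N0 + bnd C" using L2 o23' e0 by (smt (verit) mult_left_mono)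
  have kstR: "\<forall>R1 R2 R3. R1 \<subseteq> V1 \<longrightarrow> R2 \<subseteq> V2 \<longrightarrow> R3 \<subseteq> V3 \<longrightarrow>
       real (card R1) \<ge> \<epsilon> * card V1 \<longrightarrow> real (card R2) \<ge> \<epsilon> * card V2 \<longrightarrow> real (card R3) \<ge> \<epsilon> * card V3 \<longrightarrow>
       card R1 \<ge> N0 \<longrightarrow> card R2 \<ge> N0 \<longrightarrow> card R3 \<ge> N0 \<longrightarrow>
       (\<exists>S1 S2 S3. S1 \<subseteq> R1 \<and> S2 \<subseteq> R2 \<and> S3 \<subseteq> R3 \<and> card S1 = c \<and> card S2 = c \<and> card S3 = c \<and>
          (\<forall>x\<in>S1. \<forall>y\<in>S2. \<forall>z\<in>S3. {x,y,z} \<in> H))"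
  proof (intro allI impI)
    fix R1 R2 R3 assume R: "R1 \<subseteq> V1" "R2 \<subseteq> V2" "R3 \<subseteq> V3"
      and e: "real (card R1) \<ge> \<epsilon> * card V1" "real (card R2) \<ge> \<epsilon> * card V2" "real (card R3) \<ge> \<epsilon> * card V3"
      and N: "card R1 \<ge> N0" "card R2 \<ge> N0" "card R3 \<ge> N0"
    have fR: "finite R1" "finite R2" "finite R3" using R fV finite_subset by blast+
    have cpos: "card R1 > 0" "card R2 > 0" "card R3 > 0" using N N0c bc ab a0 by linarith+
    have "\<bar>density H R1 R2 R3 - d\<bar> \<le> \<epsilon>" using reg R e unfolding eps_d_regular_def by blast
    hence "density H R1 R2 R3 \<ge> \<epsilon>" using ed by linarith
    from dens_to_count[OF fR cpos this]
    have "real (card {(x,y,z). x\<in>R1 \<and> y\<in>R2 \<and> z\<in>R3 \<and> {x,y,z}\<in>H}) \<ge> \<epsilon> * card R1 * card R2 * card R3" .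
    from KST[rule_format, OF fR N this] show "\<exists>S1 S2 S3. S1 \<subseteq> R1 \<and> S2 \<subseteq> R2 \<and> S3 \<subseteq> R3 \<and> card S1 = c \<and> card S2 = c \<and> card S3 = c \<and>
          (\<forall>x\<in>S1. \<forall>y\<in>S2. \<forall>z\<in>S3. {x,y,z} \<in> H)" by blast
  qed
  define \<beta> where "\<beta> = real c / real a * \<epsilon> * real (card V1 + card V2 + card V3)"
  have \<beta>eq: "\<beta> = C / A * \<epsilon> * (n1 + n2 + n3)" by (simp add: \<beta>_def C_def A_def n1_def n2_def n3_def)
  have "\<exists>\<T>. is_Kabc_tiling H (V1 \<union> V2 \<union> V3) a b c \<T> \<and> (\<Union>Y\<in>\<T>. copy_verts Y) \<subseteq> V1 \<union> V2 \<union> V3 \<and>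
      real (card ((V1 \<union> V2 \<union> V3) - (\<Union>Y\<in>\<T>. copy_verts Y))) \<le> \<beta>"
  proof (cases "a = c")
    case True
    hence abc: "b = a" "c = a" using ab bc by auto
    hence n12: "n1 = n2" and n23: "n2 = n3" using h1 h2 o12' o23' A1 by (auto simp: A_def B_def C_def)
    define P where "P = (\<lambda>(r1::nat) (r2::nat) (r3::nat). r1 = r2 \<and> r2 = r3)"
    have \<beta>eq2: "\<beta> = \<epsilon> * (n1 + n2 + n3)" using \<beta>eq abc A1 by (simp add: A_def C_def)
    show ?thesis
    proof (rule tiling_ind[OF d12 d13 d23 fV kstR a0 ab bc, of P \<beta>])
      show "\<forall>r1 r2 r3. P r1 r2 r3 \<longrightarrow> real (r1 + r2 + r3) \<le> \<beta> \<or>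
       (real r1 \<ge> \<epsilon> * card V1 \<and> real r2 \<ge> \<epsilon> * card V2 \<and> real r3 \<ge> \<epsilon> * card V3 \<and>
        r1 \<ge> N0 \<and> r2 \<ge> N0 \<and> r3 \<ge> N0 \<and>
        (\<exists>k1 k2 k3. (k1,k2,k3) \<in> moves a b c \<and> k1 \<le> r1 \<and> k2 \<le> r2 \<and> k3 \<le> r3 \<and>
            P (r1-k1) (r2-k2) (r3-k3)))"
      proof (intro allI impI)
        fix r1 r2 r3 assume "P r1 r2 r3"
        hence r: "r2 = r1" "r3 = r1" by (auto simp: P_def)
        show "real (r1 + r2 + r3) \<le> \<beta> \<or>
       (real r1 \<ge> \<epsilon> * card V1 \<and> real r2 \<ge> \<epsilon> * card V2 \<and> real r3 \<ge> \<epsilon> * card V3 \<and>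
        r1 \<ge> N0 \<and> r2 \<ge> N0 \<and> r3 \<ge> N0 \<and>
        (\<exists>k1 k2 k3. (k1,k2,k3) \<in> moves a b c \<and> k1 \<le> r1 \<and> k2 \<le> r2 \<and> k3 \<le> r3 \<and>
            P (r1-k1) (r2-k2) (r3-k3)))"
        proof (cases "real r1 < \<epsilon> * n1")
          case True
          hence "real (r1 + r2 + r3) \<le> \<beta>" using r \<beta>eq2 n12 n23 by simp
          thus ?thesis by blast
        next
          case False
          hence "real r1 \<ge> real N0" using L1 bnd0 by linarith
          hence rN: "r1 \<ge> N0" by simp
          have "(a,a,a) \<in> moves a b c" using abc by (simp add: moves_def)
          moreover have "a \<le> r1" using rN N0c abc by simp
          ultimately have "\<exists>k1 k2 k3. (k1,k2,k3) \<in> moves a b c \<and> k1 \<le> r1 \<and> k2 \<le> r2 \<and> k3 \<le> r3 \<and>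
            P (r1-k1) (r2-k2) (r3-k3)" using r by (auto simp: P_def)
          moreover have "real r1 \<ge> \<epsilon> * card V1" "real r2 \<ge> \<epsilon> * card V2" "real r3 \<ge> \<epsilon> * card V3"
            using False r n12 n23 by (auto simp: n1_def n2_def n3_def)
          ultimately show ?thesis using rN r by blast
        qed
      qed
    qed (use n12 n23 in \<open>auto simp: P_def n1_def n2_def n3_def\<close>)
  next
    case False
    hence ac: "A + 1 \<le> C" using ab bc by (simp add: A_def C_def)
    define P where "P = (\<lambda>(r1::nat) (r2::nat) (r3::nat). InvR A B C (real r1 - \<epsilon> * n1) (real r2 - \<epsilon> * n2) (real r3 - \<epsilon> * n3))"
    have ABd: "B = A \<or> A + 1 \<le> B" using ab by (auto simp: A_def B_def)
    have BCd: "C = B \<or> B + 1 \<le> C" using bc by (auto simp: C_def B_def)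
    have slack: "\<beta> \<ge> \<epsilon> * (n1 + n2 + n3) + bnd C"
    proof -
      have "C / A \<ge> 1 + 1 / C"
      proof -
        have "C * C \<ge> (A + 1) * C" using ac Cp by (intro mult_right_mono) auto
        hence "C * C \<ge> A * C + A" using AB BC by (simp add: algebra_simps)
        thus ?thesis using A1 Cp by (simp add: field_simps)
      qed
      hence "C / A * (\<epsilon> * (n1 + n2 + n3)) \<ge> (1 + 1/C) * (\<epsilon> * (n1 + n2 + n3))"
        using e0 nn by (intro mult_right_mono) auto
      moreover have "(1 + 1/C) * (\<epsilon> * (n1 + n2 + n3)) = \<epsilon> * (n1 + n2 + n3) + \<epsilon> * (n1+n2+n3) / C"
        by (simp add: algebra_simps add_divide_distrib)
      moreover have "\<epsilon> * (n1+n2+n3) / C \<ge> \<epsilon> * n3 / C"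
        using e0 nn Cp by (intro divide_right_mono mult_left_mono) auto
      ultimately show ?thesis using \<beta>eq large' by (simp add: mult.assoc)
    qed
    show ?thesis
    proof (rule tiling_ind[OF d12 d13 d23 fV kstR a0 ab bc, of P \<beta>])
      show "\<forall>r1 r2 r3. P r1 r2 r3 \<longrightarrow> real (r1 + r2 + r3) \<le> \<beta> \<or>
       (real r1 \<ge> \<epsilon> * card V1 \<and> real r2 \<ge> \<epsilon> * card V2 \<and> real r3 \<ge> \<epsilon> * card V3 \<and>
        r1 \<ge> N0 \<and> r2 \<ge> N0 \<and> r3 \<ge> N0 \<and>
        (\<exists>k1 k2 k3. (k1,k2,k3) \<in> moves a b c \<and> k1 \<le> r1 \<and> k2 \<le> r2 \<and> k3 \<le> r3 \<and>
            P (r1-k1) (r2-k2) (r3-k3)))"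
      proof (intro allI impI)
        fix r1 r2 r3 assume Pr: "P r1 r2 r3"
        define s1 where "s1 = real r1 - \<epsilon> * n1"
        define s2 where "s2 = real r2 - \<epsilon> * n2"
        define s3 where "s3 = real r3 - \<epsilon> * n3"
        have I: "InvR A B C s1 s2 s3" using Pr by (simp add: P_def s1_def s2_def s3_def)
        show "real (r1 + r2 + r3) \<le> \<beta> \<or>
       (real r1 \<ge> \<epsilon> * card V1 \<and> real r2 \<ge> \<epsilon> * card V2 \<and> real r3 \<ge> \<epsilon> * card V3 \<and>
        r1 \<ge> N0 \<and> r2 \<ge> N0 \<and> r3 \<ge> N0 \<and>
        (\<exists>k1 k2 k3. (k1,k2,k3) \<in> moves a b c \<and> k1 \<le> r1 \<and> k2 \<le> r2 \<and> k3 \<le> r3 \<and>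
            P (r1-k1) (r2-k2) (r3-k3)))"
        proof (cases "s1 < 4*C*C \<or> s2 < 4*C*C \<or> s3 < 4*C*C")
          case True
          from strat_stop[OF A1 AB BC I True] have "s1 + s2 + s3 \<le> bnd C" by (simp add: bnd_def)
          hence "real (r1 + r2 + r3) \<le> \<beta>" using slack by (simp add: s1_def s2_def s3_def algebra_simps)
          thus ?thesis by blast
        next
          case False
          hence sL: "4*C*C \<le> s1" "4*C*C \<le> s2" "4*C*C \<le> s3" by auto
          have CC: "C \<le> 4*C*C" using Cp by (simp add: mult.assoc)
          have rge: "real r1 \<ge> \<epsilon> * n1 + C" "real r2 \<ge> \<epsilon> * n2 + C" "real r3 \<ge> \<epsilon> * n3 + C"
            using sL CC by (auto simp: s1_def s2_def s3_def)
          have rc: "c \<le> r1" "c \<le> r2" "c \<le> r3"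
            using rge e0 nn by (auto simp: C_def) (smt (verit) mult_nonneg_nonneg of_nat_le_iff)+
          have rN: "r1 \<ge> N0" "r2 \<ge> N0" "r3 \<ge> N0"
            using rge L1 L2 L3 bnd0 Cp by (smt (verit) of_nat_le_iff)+
          have rE: "real r1 \<ge> \<epsilon> * card V1" "real r2 \<ge> \<epsilon> * card V2" "real r3 \<ge> \<epsilon> * card V3"
            using rge Cp by (auto simp: n1_def n2_def n3_def)
          have mvok: "\<exists>k1 k2 k3. (k1,k2,k3) \<in> moves a b c \<and> k1 \<le> r1 \<and> k2 \<le> r2 \<and> k3 \<le> r3 \<and>
            P (r1-k1) (r2-k2) (r3-k3)"
            if mk: "(k1,k2,k3) \<in> moves a b c" and Ik: "InvR A B C (s1 - real k1) (s2 - real k2) (s3 - real k3)" for k1 k2 k3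
          proof -
            have kc: "k1 \<le> c" "k2 \<le> c" "k3 \<le> c" using mk ab bc by (auto simp: moves_def)
            hence kr: "k1 \<le> r1" "k2 \<le> r2" "k3 \<le> r3" using rc by linarith+
            have "P (r1-k1) (r2-k2) (r3-k3)" using Ik kr
              by (simp add: P_def s1_def s2_def s3_def of_nat_diff algebra_simps)
            thus ?thesis using mk kr by blast
          qed
          have "InvR A B C (s1-A) (s2-B) (s3-C) \<or> InvR A B C (s1-A) (s2-C) (s3-B) \<or>
                InvR A B C (s1-B) (s2-A) (s3-C) \<or> InvR A B C (s1-B) (s2-C) (s3-A) \<or>
                InvR A B C (s1-C) (s2-A) (s3-B) \<or> InvR A B C (s1-C) (s2-B) (s3-A)"
            by (rule strat_real[OF A1 AB BC ABd BCd I sL])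
          hence "\<exists>k1 k2 k3. (k1,k2,k3) \<in> moves a b c \<and> k1 \<le> r1 \<and> k2 \<le> r2 \<and> k3 \<le> r3 \<and>
            P (r1-k1) (r2-k2) (r3-k3)"
          proof (elim disjE)
            assume "InvR A B C (s1-A) (s2-B) (s3-C)" thus ?thesis using mvok[of a b c] by (simp add: moves_def A_def B_def C_def)
          next
            assume "InvR A B C (s1-A) (s2-C) (s3-B)" thus ?thesis using mvok[of a c b] by (simp add: moves_def A_def B_def C_def)
          next
            assume "InvR A B C (s1-B) (s2-A) (s3-C)" thus ?thesis using mvok[of b a c] by (simp add: moves_def A_def B_def C_def)
          next
            assume "InvR A B C (s1-B) (s2-C) (s3-A)" thus ?thesis using mvok[of b c a] by (simp add: moves_def A_def B_def C_def)
          next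
            assume "InvR A B C (s1-C) (s2-A) (s3-B)" thus ?thesis using mvok[of c a b] by (simp add: moves_def A_def B_def C_def)
          next
            assume "InvR A B C (s1-C) (s2-B) (s3-A)" thus ?thesis using mvok[of c b a] by (simp add: moves_def A_def B_def C_def)
          qed
          thus ?thesis using rN rE by blast
        qed
      qed
    next
      show "P (card V1) (card V2) (card V3)"
      proof -
        have "0 \<le> (1 - \<epsilon>) * (n2 - n1)" using e1 o12' by simp
        moreover have "0 \<le> (1 - \<epsilon>) * (n3 - n2)" using e1 o23' by simp
        moreover have "0 \<le> (1 - \<epsilon>) * (n1 * B - n2 * A)" using e1 h1 by simp
        moreover have "0 \<le> (1 - \<epsilon>) * (n2 * C - n3 * B)" using e1 h2 by simp
        ultimately show ?thesis using Cp unfolding P_def InvR_def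
          by (simp add: n1_def[symmetric] n2_def[symmetric] n3_def[symmetric] algebra_simps)
      qed
    qed auto
  qed
  thus ?thesis by (auto simp: \<beta>_def)
qed



theorem proposition4p1:
  fixes a b c :: nat and \<epsilon> d :: real
  assumes "0 < a" "a \<le> b" "b \<le> c" "0 < 2 * \<epsilon>" "2 * \<epsilon> \<le> d"
  shows "\<exists>M::nat. \<forall>m\<ge>M. \<forall>(VH :: 'a set) H V1 V2 V3.
     three_graph VH H \<longrightarrow>
     V1 \<subseteq> VH \<longrightarrow> V2 \<subseteq> VH \<longrightarrow> V3 \<subseteq> VH \<longrightarrow>
     finite V1 \<longrightarrow> finite V2 \<longrightarrow> finite V3 \<longrightarrow>
     V1 \<inter> V2 = {} \<longrightarrow> V1 \<inter> V3 = {} \<longrightarrow> V2 \<inter> V3 = {} \<longrightarrow>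
     V1 \<noteq> {} \<longrightarrow> V2 \<noteq> {} \<longrightarrow> V3 \<noteq> {} \<longrightarrow>
     eps_d_regular H \<epsilon> d V1 V2 V3 \<longrightarrow>
     card V1 \<le> card V2 \<longrightarrow> card V2 \<le> card V3 \<longrightarrow> card V3 = m \<longrightarrow>
     real (card V1) / real a \<ge> real (card V2) / real b \<longrightarrow>
     real (card V2) / real b \<ge> real (card V3) / real c \<longrightarrow>
     (\<exists>\<T>. is_Kabc_tiling H (V1 \<union> V2 \<union> V3) a b c \<T> \<and>
        real (card ((V1 \<union> V2 \<union> V3) - (\<Union>T\<in>\<T>. copy_verts T)))
          \<le> real c / real a * \<epsilon> * real (card V1 + card V2 + card V3))"
proof (cases "\<epsilon> \<ge> 1")
  case True
  have ac: "a \<le> c" using assms by simp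
  show ?thesis
    by (intro exI[of _ "0::nat"] allI impI) (rule case_eps_big[OF assms(1) ac True])
next
  case False
  have e0: "\<epsilon> > 0" and e1: "\<epsilon> < 1" using assms(4) False by simp_all
  obtain N1 :: nat where K1: "\<forall>(X::'a set) (Y::'a set) (Z::'a set) Q.
     finite X \<longrightarrow> finite Y \<longrightarrow> finite Z \<longrightarrow> card X \<ge> N1 \<longrightarrow> card Y \<ge> N1 \<longrightarrow> card Z \<ge> N1 \<longrightarrow>
     real (card {(x,y,z). x\<in>X \<and> y\<in>Y \<and> z\<in>Z \<and> Q x y z}) \<ge> \<epsilon> * card X * card Y * card Z \<longrightarrow>
     (\<exists>S T W. S\<subseteq>X \<and> T\<subseteq>Y \<and> W\<subseteq>Z \<and> card S = c \<and> card T = c \<and> card W = c \<and>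
        (\<forall>x\<in>S. \<forall>y\<in>T. \<forall>z\<in>W. Q x y z))"
    using kst3[OF e0, where s = c] by (elim exE) (rule that)
  define N0 where "N0 = max N1 c"
  have KST: "\<forall>(X::'a set) (Y::'a set) (Z::'a set) Q.
     finite X \<longrightarrow> finite Y \<longrightarrow> finite Z \<longrightarrow> card X \<ge> N0 \<longrightarrow> card Y \<ge> N0 \<longrightarrow> card Z \<ge> N0 \<longrightarrow>
     real (card {(x,y,z). x\<in>X \<and> y\<in>Y \<and> z\<in>Z \<and> Q x y z}) \<ge> \<epsilon> * card X * card Y * card Z \<longrightarrow>
     (\<exists>S T W. S\<subseteq>X \<and> T\<subseteq>Y \<and> W\<subseteq>Z \<and> card S = c \<and> card T = c \<and> card W = c \<and>
        (\<forall>x\<in>S. \<forall>y\<in>T. \<forall>z\<in>W. Q x y z))"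
  proof (intro allI impI)
    fix X Y Z :: "'a set" and Q
    assume h: "finite X" "finite Y" "finite Z" "card X \<ge> N0" "card Y \<ge> N0" "card Z \<ge> N0"
      "real (card {(x,y,z). x\<in>X \<and> y\<in>Y \<and> z\<in>Z \<and> Q x y z}) \<ge> \<epsilon> * card X * card Y * card Z"
    have "card X \<ge> N1" "card Y \<ge> N1" "card Z \<ge> N1" using h(4-6) by (auto simp: N0_def)
    from K1[rule_format, OF h(1-3) this h(7)]
    show "\<exists>S T W. S\<subseteq>X \<and> T\<subseteq>Y \<and> W\<subseteq>Z \<and> card S = c \<and> card T = c \<and> card W = c \<and>
        (\<forall>x\<in>S. \<forall>y\<in>T. \<forall>z\<in>W. Q x y z)" .
  qed
  have N0c: "N0 \<ge> c" by (simp add: N0_def)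
  define X where "X = real c * (real N0 + bnd (real c)) / \<epsilon>"
  define M where "M = nat \<lceil>X\<rceil>"
  have cpos: "real c > 0" using assms by simp
  show ?thesis
  proof (intro exI[of _ M] allI impI)
    fix m :: nat and VH :: "'a set" and H V1 V2 V3
    assume m: "m \<ge> M" and "three_graph VH H" "V1 \<subseteq> VH" "V2 \<subseteq> VH" "V3 \<subseteq> VH"
      and fV: "finite V1" "finite V2" "finite V3"
      and d12: "V1 \<inter> V2 = {}" and d13: "V1 \<inter> V3 = {}" and d23: "V2 \<inter> V3 = {}"
      and "V1 \<noteq> {}" "V2 \<noteq> {}" "V3 \<noteq> {}"
      and reg: "eps_d_regular H \<epsilon> d V1 V2 V3"
      and o12: "card V1 \<le> card V2" and o23: "card V2 \<le> card V3" and cm: "card V3 = m"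
      and r12: "real (card V1) / real a \<ge> real (card V2) / real b"
      and r23: "real (card V2) / real b \<ge> real (card V3) / real c"
    have "real m \<ge> X"
    proof -
      have "real m \<ge> real M" using m by simp
      moreover have "real M \<ge> X" unfolding M_def by linarith
      ultimately show ?thesis by linarith
    qed
    hence "\<epsilon> * real m \<ge> real c * (real N0 + bnd (real c))" using e0 by (simp add: X_def field_simps)
    hence large: "\<epsilon> * real (card V3) / real c \<ge> real N0 + bnd (real c)"
      using cpos cm by (simp add: field_simps)
    show "\<exists>\<T>. is_Kabc_tiling H (V1 \<union> V2 \<union> V3) a b c \<T> \<and>
        real (card ((V1 \<union> V2 \<union> V3) - (\<Union>T\<in>\<T>. copy_verts T)))
          \<le> real c / real a * \<epsilon> * real (card V1 + card V2 + card V3)"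
      by (rule core[OF assms(1-3) e0 e1 _ KST N0c fV d12 d13 d23 reg o12 o23 r12 r23 large])
        (use assms in linarith)
  qed
qed


end
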